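(* Let $m,n\ge r\ge1$, let $L:\mathbb{R}^{m\times n}\to\mathbb{R}$ be differentiable, let $\lambda>0$ and $\tau>0$, and let $\mathcal{L}_{L2}(A,B)=L(AB^\top)+\frac{\lambda}{2}\left(\|A\|_F^2+\|B\|_F^2\right)$ for $A\in\mathbb{R}^{m\times r}$, $B\in\mathbb{R}^{n\times r}$. Let $(A(t),B(t))_{t\ge0}$ be a solution of the gradient flow $\tau\dot A=-\nabla_A\mathcal{L}_{L2}(A,B)$, $\tau\dot B=-\nabla_B\mathcal{L}_{L2}(A,B)$. Then $A(t)^\top A(t)-B(t)^\top B(t)$ converges exponentially fast to $0$ as $t\to\infty$.
   Context: $\|\cdot\|_F$ is the Frobenius norm. "Converges exponentially fast to 0" means its norm is bounded by $Ce^{-ct}$ for some constants $C,c>0$. *)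

theory Defs
  imports "HOL-Analysis.Analysis"
begin

definition frob_norm :: "real^'n^'m \<Rightarrow> real" where
  "frob_norm X = sqrt (\<Sum>i\<in>UNIV. \<Sum>j\<in>UNIV. (X $ i $ j)^2)"

text \<open>g is the gradient of f at x (w.r.t. the Frobenius inner product, which is
  the inner product of the Euclidean space of matrices).\<close>
definition is_gradient :: "('a::real_inner \<Rightarrow> real) \<Rightarrow> 'a \<Rightarrow> 'a \<Rightarrow> bool" where
  "is_gradient f x g \<longleftrightarrow> (f has_derivative (\<lambda>h. g \<bullet> h)) (at x)"

definition L2_obj :: "(real^'n^'m \<Rightarrow> real) \<Rightarrow> real \<Rightarrow> real^'r^'m \<Rightarrow> real^'r^'n \<Rightarrow> real" where
  "L2_obj L lam A B = L (A ** transpose B) + lam / 2 * ((frob_norm A)^2 + (frob_norm B)^2)"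

end

theory Submission imports Defs begin

lemma inner_mat: "(X::real^'n^'m) \<bullet> Y = (\<Sum>i\<in>UNIV. \<Sum>j\<in>UNIV. X$i$j * Y$i$j)"
  by (simp add: inner_vec_def)

lemma frob_sq: "(frob_norm (X::real^'n^'m))^2 = X \<bullet> X"
  unfolding frob_norm_def inner_mat
  by (simp add: sum_nonneg power2_eq_square)

lemma lin_right: "bounded_linear (\<lambda>X::real^'r^'m. X ** (M::real^'n^'r))"
  unfolding linear_conv_bounded_linear[symmetric]
  by (rule linearI) (simp_all add: vec_eq_iff matrix_matrix_mult_def sum.distrib sum_distrib_left algebra_simps)

lemma lin_left: "bounded_linear (\<lambda>Y::real^'r^'n. (M::real^'r^'m) ** transpose Y)"
  unfolding linear_conv_bounded_linear[symmetric]
  by (rule linearI) (simp_all add: vec_eq_iff matrix_matrix_mult_def transpose_def sum.distrib sum_distrib_left algebra_simps)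

definition Eu :: "'r::finite \<Rightarrow> 'r \<Rightarrow> real^'r^'r" where
  "Eu q p = (\<chi> a b. if a = q \<and> b = p then 1 else 0)"

lemma Eu_mul: "(Y ** Eu q p) $ i $ j = (if j = p then Y$i$q else 0)"
  by (simp add: Eu_def matrix_matrix_mult_def if_distrib cong: if_cong)

lemma Eu_inner: "(X::real^'r^'m) \<bullet> (Y ** Eu q p) = (\<Sum>i\<in>UNIV. X$i$p * Y$i$q)"
  unfolding inner_mat Eu_mul by (simp add: if_distrib cong: if_cong)

lemma Eu_tr: "transpose (Eu q p) = Eu p q"
  by (auto simp: Eu_def transpose_def vec_eq_iff)

lemma gradA:
  fixes L :: "real^'n^'m \<Rightarrow> real" and At :: "real^'r^'m" and Bt :: "real^'r^'n"
  assumes g: "is_gradient (\<lambda>X. L2_obj L lam X Bt) At gA"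
    and dL: "(L has_derivative L') (at (At ** transpose Bt))"
  shows "gA \<bullet> h = L' (h ** transpose Bt) + lam * (At \<bullet> h)"
proof -
  have d1: "((\<lambda>X. X ** transpose Bt) has_derivative (\<lambda>h. h ** transpose Bt)) (at At)"
    by (rule bounded_linear.has_derivative[OF lin_right]) (rule has_derivative_ident)
  have d2: "((\<lambda>X. L (X ** transpose Bt)) has_derivative (\<lambda>h. L' (h ** transpose Bt))) (at At)"
    using diff_chain_at[OF d1 dL] by (simp add: o_def)
  have d3: "((\<lambda>X. X \<bullet> X) has_derivative (\<lambda>h. At \<bullet> h + h \<bullet> At)) (at At)"
    by (rule has_derivative_inner[OF has_derivative_ident has_derivative_ident])
  have d4: "((\<lambda>X. L2_obj L lam X Bt) has_derivative
      (\<lambda>h. L' (h ** transpose Bt) + lam/2 * ((At \<bullet> h + h \<bullet> At) + 0))) (at At)"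
    unfolding L2_obj_def frob_sq
    by (intro has_derivative_add d2 has_derivative_mult_right d3 has_derivative_const)
  have "(\<lambda>h. gA \<bullet> h) = (\<lambda>h. L' (h ** transpose Bt) + lam/2 * ((At \<bullet> h + h \<bullet> At) + 0))"
    using has_derivative_unique[OF g[unfolded is_gradient_def] d4] .
  then have "gA \<bullet> h = L' (h ** transpose Bt) + lam/2 * ((At \<bullet> h + h \<bullet> At) + 0)" by (rule fun_cong)
  then show ?thesis by (simp add: inner_commute[of h At] algebra_simps)
qed


lemma gradB:
  fixes L :: "real^'n^'m \<Rightarrow> real" and At :: "real^'r^'m" and Bt :: "real^'r^'n"
  assumes g: "is_gradient (\<lambda>Y. L2_obj L lam At Y) Bt gB"
    and dL: "(L has_derivative L') (at (At ** transpose Bt))"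
  shows "gB \<bullet> k = L' (At ** transpose k) + lam * (Bt \<bullet> k)"
proof -
  have d1: "((\<lambda>Y. At ** transpose Y) has_derivative (\<lambda>k. At ** transpose k)) (at Bt)"
    by (rule bounded_linear.has_derivative[OF lin_left]) (rule has_derivative_ident)
  have d2: "((\<lambda>Y. L (At ** transpose Y)) has_derivative (\<lambda>k. L' (At ** transpose k))) (at Bt)"
    using diff_chain_at[OF d1 dL] by (simp add: o_def)
  have d3: "((\<lambda>Y. Y \<bullet> Y) has_derivative (\<lambda>h. Bt \<bullet> h + h \<bullet> Bt)) (at Bt)"
    by (rule has_derivative_inner[OF has_derivative_ident has_derivative_ident])
  have d4: "((\<lambda>Y. L2_obj L lam At Y) has_derivative
      (\<lambda>h. L' (At ** transpose h) + lam/2 * (0 + (Bt \<bullet> h + h \<bullet> Bt)))) (at Bt)"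
    unfolding L2_obj_def frob_sq
    by (intro has_derivative_add d2 has_derivative_mult_right d3 has_derivative_const)
  have "(\<lambda>h. gB \<bullet> h) = (\<lambda>h. L' (At ** transpose h) + lam/2 * (0 + (Bt \<bullet> h + h \<bullet> Bt)))"
    using has_derivative_unique[OF g[unfolded is_gradient_def] d4] .
  then have "gB \<bullet> k = L' (At ** transpose k) + lam/2 * (0 + (Bt \<bullet> k + k \<bullet> Bt))" by (rule fun_cong)
  then show ?thesis by (simp add: inner_commute[of k Bt] algebra_simps)
qed

lemma comp_deriv:
  assumes "(A has_vector_derivative V) F"
  shows "((\<lambda>t. A t $ i $ j) has_real_derivative (V $ i $ j)) F"
proof -
  have bl: "bounded_linear (\<lambda>X. X $ i $ j :: real)"
    using bounded_linear_compose[OF bounded_linear_vec_nth bounded_linear_vec_nth] by blast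
  show ?thesis unfolding has_real_derivative_iff_has_vector_derivative
    using bounded_linear.has_vector_derivative[OF bl assms] .
qed

theorem lemma2:
  fixes L :: "real^'n^'m \<Rightarrow> real"
    and A :: "real \<Rightarrow> real^'r^'m"
    and B :: "real \<Rightarrow> real^'r^'n"
    and lam \<tau> :: real
  assumes "CARD('r) \<le> CARD('m)" and "CARD('r) \<le> CARD('n)"
    and "\<And>X. L differentiable (at X)"
    and "lam > 0" and "\<tau> > 0"
    and flow: "\<And>t. t \<ge> 0 \<Longrightarrow> \<exists>gA gB.
        is_gradient (\<lambda>X. L2_obj L lam X (B t)) (A t) gA \<and>
        is_gradient (\<lambda>Y. L2_obj L lam (A t) Y) (B t) gB \<and>
        (A has_vector_derivative (- (1/\<tau>) *\<^sub>R gA)) (at t within {0..}) \<and>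
        (B has_vector_derivative (- (1/\<tau>) *\<^sub>R gB)) (at t within {0..})"
  shows "\<exists>C c. C > 0 \<and> c > 0 \<and> (\<forall>t\<ge>0.
     frob_norm (transpose (A t) ** A t - transpose (B t) ** B t) \<le> C * exp (- c * t))"
proof -
  define c where "c = 2 * lam / \<tau>"
  have cpos: "c > 0" using assms(4,5) by (simp add: c_def)
  define f where "f p q t = (\<Sum>i\<in>UNIV. A t$i$p * A t$i$q) - (\<Sum>j\<in>UNIV. B t$j$p * B t$j$q)" for p q t
  have Df: "(transpose (A t) ** A t - transpose (B t) ** B t) $ p $ q = f p q t" for p q t
    by (simp add: f_def matrix_matrix_mult_def transpose_def)
  have deriv: "(f p q has_real_derivative (- c * f p q t)) (at t within {0..})"
    if t: "t \<ge> 0" for p q t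
  proof -
    obtain gA gB where gA: "is_gradient (\<lambda>X. L2_obj L lam X (B t)) (A t) gA"
      and gB: "is_gradient (\<lambda>Y. L2_obj L lam (A t) Y) (B t) gB"
      and dA: "(A has_vector_derivative (- (1/\<tau>) *\<^sub>R gA)) (at t within {0..})"
      and dB: "(B has_vector_derivative (- (1/\<tau>) *\<^sub>R gB)) (at t within {0..})"
      using flow[OF t] by blast
    obtain L' where dL: "(L has_derivative L') (at (A t ** transpose (B t)))"
      using assms(3) unfolding differentiable_def by blast
    define a' where "a' = - (1/\<tau>) *\<^sub>R gA"
    define b' where "b' = - (1/\<tau>) *\<^sub>R gB"
    have "(f p q has_real_derivative
        (\<Sum>i\<in>UNIV. a'$i$p * A t$i$q + A t$i$p * a'$i$q) - (\<Sum>j\<in>UNIV. b'$j$p * B t$j$q + B t$j$p * b'$j$q))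
        (at t within {0..})"
      unfolding f_def a'_def b'_def
      by (intro DERIV_diff DERIV_sum) (auto intro!: derivative_eq_intros comp_deriv[OF dA] comp_deriv[OF dB])
    also have "(\<Sum>i\<in>UNIV. a'$i$p * A t$i$q + A t$i$p * a'$i$q) - (\<Sum>j\<in>UNIV. b'$j$p * B t$j$q + B t$j$p * b'$j$q)
       = (a' \<bullet> (A t ** Eu q p) + a' \<bullet> (A t ** Eu p q)) - (b' \<bullet> (B t ** Eu q p) + b' \<bullet> (B t ** Eu p q))"
      unfolding Eu_inner by (simp add: sum.distrib mult.commute)
    also have "\<dots> = - c * f p q t"
    proof -
      have sA: "A t \<bullet> (A t ** Eu q p) = (\<Sum>i\<in>UNIV. A t$i$p * A t$i$q)"
           "A t \<bullet> (A t ** Eu p q) = (\<Sum>i\<in>UNIV. A t$i$p * A t$i$q)"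
        unfolding Eu_inner by (simp_all add: mult.commute)
      have sB: "B t \<bullet> (B t ** Eu q p) = (\<Sum>i\<in>UNIV. B t$i$p * B t$i$q)"
           "B t \<bullet> (B t ** Eu p q) = (\<Sum>i\<in>UNIV. B t$i$p * B t$i$q)"
        unfolding Eu_inner by (simp_all add: mult.commute)
      have tr: "A t ** transpose (B t ** Eu q p) = (A t ** Eu p q) ** transpose (B t)"
               "A t ** transpose (B t ** Eu p q) = (A t ** Eu q p) ** transpose (B t)"
        by (simp_all add: matrix_transpose_mul Eu_tr matrix_mul_assoc)
      show ?thesis
        unfolding a'_def b'_def inner_scaleR_left
          gradA[OF gA dL] gradB[OF gB dL] sA sB tr f_def c_def
        using assms(5) by (simp add: field_simps)
    qed
    finally show ?thesis .
  qed
  have sol: "f p q t = f p q 0 * exp (- c * t)" if t: "t \<ge> 0" for p q t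
  proof -
    have "\<exists>k. \<forall>x\<in>{0::real..}. f p q x * exp (c * x) = k"
    proof (rule has_field_derivative_zero_constant)
      fix x :: real assume x: "x \<in> {0..}"
      show "((\<lambda>x. f p q x * exp (c * x)) has_real_derivative 0) (at x within {0..})"
        using x by (auto intro!: derivative_eq_intros deriv simp: algebra_simps)
    qed simp
    then obtain k where k: "\<And>x. x \<ge> 0 \<Longrightarrow> f p q x * exp (c * x) = k" by auto
    have "f p q t = f p q t * exp (c * t) * exp (- c * t)"
      by (simp add: mult.assoc flip: exp_add)
    then have "f p q t = k * exp (- c * t)" using k[OF t] by simp
    moreover have "f p q 0 = k" using k[of 0] by simp
    ultimately show ?thesis by simp
  qed
  define C where "C = frob_norm (transpose (A 0) ** A 0 - transpose (B 0) ** B 0) + 1"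
  have fn0: "frob_norm X \<ge> 0" for X :: "real^'r^'r"
    unfolding frob_norm_def by (simp add: sum_nonneg)
  have "C > 0" unfolding C_def using fn0 by (smt (verit))
  moreover have "frob_norm (transpose (A t) ** A t - transpose (B t) ** B t) \<le> C * exp (- c * t)"
    if t: "t \<ge> 0" for t
  proof -
    define S where "S = (\<Sum>i\<in>UNIV. \<Sum>j\<in>UNIV. (f i j 0)^2)"
    have "(\<Sum>i\<in>UNIV. \<Sum>j\<in>UNIV. (f i j t)^2) = (\<Sum>i\<in>UNIV. \<Sum>j\<in>UNIV. (exp (- c * t))^2 * (f i j 0)^2)"
      using sol[OF t] by (simp add: power_mult_distrib mult.commute)
    also have "\<dots> = (exp (- c * t))^2 * S"
      unfolding S_def by (simp add: sum_distrib_left)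
    finally have e1: "(\<Sum>i\<in>UNIV. \<Sum>j\<in>UNIV. (f i j t)^2) = (exp (- c * t))^2 * S" .
    have e0: "frob_norm (transpose (A 0) ** A 0 - transpose (B 0) ** B 0) = sqrt S"
      unfolding frob_norm_def Df S_def ..
    have "frob_norm (transpose (A t) ** A t - transpose (B t) ** B t) = sqrt ((exp (- c * t))^2 * S)"
      unfolding frob_norm_def Df e1 ..
    also have "\<dots> = exp (- c * t) * frob_norm (transpose (A 0) ** A 0 - transpose (B 0) ** B 0)"
      unfolding e0 real_sqrt_mult by simp
    also have "\<dots> \<le> exp (- c * t) * C" unfolding C_def by simp
    finally show ?thesis by (simp add: mult.commute)
  qed
  ultimately show ?thesis using cpos by blast
qed

end
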